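(* Let $A,B\subset\mathbb{H}$ be finite sets with $|A|\geq 2$ and $|B|\geq 2$. Then there exists a line $\ell$ in $\mathbb{H}^2$ such that $2\leq|(A\times B)\cap\ell|\leq 5$.
   Context: $\mathbb{H}$ denotes the quaternions. $\mathbb{H}^2$ is regarded as a left vector space over $\mathbb{H}$. A line in $\mathbb{H}^2$ is a set of the form $\{p+\lambda v:\lambda\in\mathbb{H}\}$ with $p,v\in\mathbb{H}^2$, $v\neq 0$, where $\lambda v$ denotes left scalar multiplication. Equivalently, lines are the sets $\{(x,y):x=c\}$ for $c\in\mathbb{H}$ and the sets $\{(x,y): y=xm+c\}$ for $m,c\in\mathbb{H}$. *)

theory Defs
  imports Complex_Main
begin

text \<open>The quaternions: a = a0 + a1 i + a2 j + a3 k with real coefficients and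
Hamilton's rules i^2 = j^2 = k^2 = ijk = -1.\<close>

datatype quat = Quat (q0: real) (q1: real) (q2: real) (q3: real)

instantiation quat :: "{zero, one, plus, times}"
begin
definition "0 = Quat 0 0 0 0"
definition "1 = Quat 1 0 0 0"
definition "a + b = Quat (q0 a + q0 b) (q1 a + q1 b) (q2 a + q2 b) (q3 a + q3 b)"
definition "a * b = Quat
   (q0 a * q0 b - q1 a * q1 b - q2 a * q2 b - q3 a * q3 b)
   (q0 a * q1 b + q1 a * q0 b + q2 a * q3 b - q3 a * q2 b)
   (q0 a * q2 b - q1 a * q3 b + q2 a * q0 b + q3 a * q1 b)
   (q0 a * q3 b + q1 a * q2 b - q2 a * q1 b + q3 a * q0 b)"
instance ..
end

definition quat_line :: "(quat \<times> quat) set \<Rightarrow> bool" where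
  "quat_line L \<longleftrightarrow> (\<exists>p v. v \<noteq> (0, 0) \<and>
      L = {(fst p + t * fst v, snd p + t * snd v) | t. True})"

end

theory Submission
  imports Defs "HOL-Analysis.Analysis"
begin

definition qsub :: "quat \<Rightarrow> quat \<Rightarrow> quat" where
  "qsub x y = Quat (q0 x - q0 y) (q1 x - q1 y) (q2 x - q2 y) (q3 x - q3 y)"

definition nq :: "quat \<Rightarrow> real" where
  "nq x = (q0 x)\<^sup>2 + (q1 x)\<^sup>2 + (q2 x)\<^sup>2 + (q3 x)\<^sup>2"

definition emb :: "quat \<Rightarrow> (real \<times> real) \<times> (real \<times> real)" where
  "emb q = ((q0 q, q1 q), (q2 q, q3 q))"

lemma nq_mult: "nq (x * y) = nq x * nq y"
  unfolding nq_def times_quat_def by (simp add: power2_eq_square algebra_simps)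

lemma nq_nonneg: "nq x \<ge> 0"
  unfolding nq_def by simp

lemma nq_zero: "nq (qsub x y) = 0 \<longleftrightarrow> x = y"
  unfolding nq_def qsub_def
  by (cases x; cases y) (auto simp: add_nonneg_eq_0_iff)

lemma sub_line: "qsub (a + t * d) (a + s * d) = qsub t s * d"
  unfolding qsub_def times_quat_def plus_quat_def by (simp add: algebra_simps)

lemma line0: "a + 0 * d = (a::quat)"
  unfolding times_quat_def plus_quat_def zero_quat_def by (cases a) simp

lemma line1: "a + 1 * qsub b a = (b::quat)"
  unfolding times_quat_def plus_quat_def one_quat_def qsub_def by (cases b) simp

lemma qsub_nz: "x \<noteq> y \<Longrightarrow> qsub x y \<noteq> 0"
  unfolding qsub_def zero_quat_def by (cases x; cases y) auto

lemma emb_inner: "inner (emb x - emb y) (emb x - emb y) = nq (qsub x y)"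
  unfolding emb_def nq_def qsub_def by (simp add: power2_eq_square)

lemma emb_inj: "inj emb"
  unfolding emb_def inj_def by (auto intro: quat.expand)

lemma equilateral_card:
  fixes S :: "'a::euclidean_space set"
  assumes fin: "finite S" and c: "c > 0"
    and eq: "\<forall>x\<in>S. \<forall>y\<in>S. x \<noteq> y \<longrightarrow> inner (x - y) (x - y) = c"
  shows "card S \<le> DIM('a) + 1"
proof (cases "S = {}")
  case True then show ?thesis by simp
next
  case False
  then obtain p where p: "p \<in> S" by blast
  define V where "V = (\<lambda>x. x - p) ` (S - {p})"
  have finV: "finite V" unfolding V_def using fin by simp
  have injV: "inj_on (\<lambda>x. x - p) (S - {p})" by (auto simp: inj_on_def)
  have cardV: "card V = card S - 1"
    unfolding V_def using card_image[OF injV] fin p by simp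
  have ip: "inner v w = (if v = w then c else c / 2)" if "v \<in> V" "w \<in> V" for v w
  proof -
    obtain x where x: "x \<in> S" "x \<noteq> p" "v = x - p" using \<open>v \<in> V\<close> unfolding V_def by auto
    obtain y where y: "y \<in> S" "y \<noteq> p" "w = y - p" using \<open>w \<in> V\<close> unfolding V_def by auto
    have vv: "inner v v = c" using eq x p by auto
    have ww: "inner w w = c" using eq y p by auto
    show ?thesis
    proof (cases "v = w")
      case True then show ?thesis using vv by simp
    next
      case False
      then have "x \<noteq> y" using x y by auto
      then have "inner (x - y) (x - y) = c" using eq x y by auto
      moreover have "x - y = v - w" using x y by simp
      ultimately have "inner (v - w) (v - w) = c" by simp
      then have "inner v v - 2 * inner v w + inner w w = c"
        by (simp add: inner_diff_left inner_diff_right inner_commute)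
      then show ?thesis using False vv ww by simp
    qed
  qed
  have indep: "independent V"
  proof (rule ccontr)
    assume "\<not> independent V"
    then obtain u v0 where v0: "v0 \<in> V" "u v0 \<noteq> 0" and s0: "(\<Sum>v\<in>V. u v *\<^sub>R v) = 0"
      using dependent_finite[OF finV] by auto
    define s where "s = (\<Sum>v\<in>V. u v)"
    have uw: "u w = - s" if w: "w \<in> V" for w
    proof -
      have "0 = inner w (\<Sum>v\<in>V. u v *\<^sub>R v)" using s0 by simp
      also have "\<dots> = (\<Sum>v\<in>V. u v * inner w v)" by (simp add: inner_sum_right)
      also have "\<dots> = (\<Sum>v\<in>V. c / 2 * u v + (if v = w then c / 2 * u v else 0))"
        by (rule sum.cong) (auto simp: ip w)
      also have "\<dots> = c / 2 * s + c / 2 * u w"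
        using finV w by (simp add: sum.distrib sum_distrib_left s_def)
      finally have "0 = c / 2 * (s + u w)" by (simp add: distrib_left)
      then have "s + u w = 0" using c by simp
      then show ?thesis by linarith
    qed
    have "(\<Sum>w\<in>V. u w) = (\<Sum>w\<in>V. - s)" using uw by (intro sum.cong) auto
    then have "s = - real (card V) * s" unfolding s_def[symmetric] by simp
    then have "(1 + real (card V)) * s = 0" by (simp add: algebra_simps)
    then have "s = 0" by (metis add_nonneg_eq_0_iff of_nat_0_le_iff zero_le_one mult_eq_0_iff one_neq_zero)
    then show False using uw[OF v0(1)] v0(2) by simp
  qed
  have "card V \<le> DIM('a)" using independent_bound[OF indep] by simp
  then show ?thesis using cardV by simp
qed

theorem theorem4:
  fixes A B :: "quat set"
  assumes "finite A" and "finite B" and "card A \<ge> 2" and "card B \<ge> 2"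
  shows "\<exists>L. quat_line L \<and> 2 \<le> card ((A \<times> B) \<inter> L) \<and> card ((A \<times> B) \<inter> L) \<le> 5"
proof -
  have two: "\<exists>x\<in>X. \<exists>y\<in>X. x \<noteq> y" if "card X \<ge> 2" "finite X" for X :: "quat set"
  proof -
    from that have "X \<noteq> {}" by auto
    then obtain x where x: "x \<in> X" by blast
    have "card (X - {x}) \<ge> 1" using that x by simp
    then obtain y where "y \<in> X - {x}" by (metis card.empty all_not_in_conv not_one_le_zero)
    then show ?thesis using x by blast
  qed
  define f where "f = (\<lambda>(x, y). nq (qsub y x))"
  define PA where "PA = {(x, y). x \<in> A \<and> y \<in> A \<and> x \<noteq> y}"
  define PB where "PB = {(x, y). x \<in> B \<and> y \<in> B \<and> x \<noteq> y}"
  have finPA: "finite PA" unfolding PA_def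
    by (rule finite_subset[of _ "A \<times> A"]) (auto simp: assms)
  have finPB: "finite PB" unfolding PB_def
    by (rule finite_subset[of _ "B \<times> B"]) (auto simp: assms)
  have nePA: "PA \<noteq> {}" using two[OF assms(3,1)] unfolding PA_def by auto
  have nePB: "PB \<noteq> {}" using two[OF assms(4,2)] unfolding PB_def by auto
  have "Min (f ` PA) \<in> f ` PA" using finPA nePA by (intro Min_in) auto
  then obtain pa where pa: "pa \<in> PA" "Min (f ` PA) = f pa" by blast
  have "Max (f ` PB) \<in> f ` PB" using finPB nePB by (intro Max_in) auto
  then obtain pb where pb: "pb \<in> PB" "Max (f ` PB) = f pb" by blast
  obtain a1 a2 where pa': "pa = (a1, a2)" by (cases pa)
  obtain b1 b2 where pb': "pb = (b1, b2)" by (cases pb)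
  have a12: "a1 \<in> A" "a2 \<in> A" "a1 \<noteq> a2" using pa pa' PA_def by auto
  have b12: "b1 \<in> B" "b2 \<in> B" "b1 \<noteq> b2" using pb pb' PB_def by auto
  define d where "d = qsub a2 a1"
  define e where "e = qsub b2 b1"
  have minA: "nq (qsub y x) \<ge> nq d" if "x \<in> A" "y \<in> A" "x \<noteq> y" for x y
  proof -
    have "(x, y) \<in> PA" using that PA_def by auto
    then have "f (x, y) \<ge> Min (f ` PA)" using finPA by simp
    then show ?thesis using pa pa' by (simp add: f_def d_def)
  qed
  have maxB: "nq (qsub y x) \<le> nq e" if "x \<in> B" "y \<in> B" "x \<noteq> y" for x y
  proof -
    have "(x, y) \<in> PB" using that PB_def by auto
    then have "f (x, y) \<le> Max (f ` PB)" using finPB by simp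
    then show ?thesis using pb pb' by (simp add: f_def e_def)
  qed
  have nqd: "nq d > 0" using a12 nq_zero[of a2 a1] nq_nonneg[of "qsub a2 a1"] d_def by auto
  have nqe: "nq e > 0" using b12 nq_zero[of b2 b1] nq_nonneg[of "qsub b2 b1"] e_def by auto
  define L where "L = {(fst (a1, b1) + t * fst (d, e), snd (a1, b1) + t * snd (d, e)) | t. True}"
  have dnz: "d \<noteq> 0" using qsub_nz a12 d_def by auto
  have lineL: "quat_line L" unfolding quat_line_def L_def using dnz by blast
  define S where "S = (A \<times> B) \<inter> L"
  have finS: "finite S" unfolding S_def using assms by simp
  have p1: "(a1, b1) \<in> S" unfolding S_def L_def using a12 b12
    by (auto intro!: exI[of _ 0] simp: line0)
  have p2: "(a2, b2) \<in> S" unfolding S_def L_def using a12 b12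
    by (auto intro!: exI[of _ 1] simp: line1 d_def e_def)
  have "card {(a1, b1), (a2, b2)} = 2" using a12 by simp
  moreover have "card {(a1, b1), (a2, b2)} \<le> card S"
    using p1 p2 finS by (intro card_mono) auto
  ultimately have ge2: "card S \<ge> 2" by simp
  have key: "b \<noteq> b' \<and> nq (qsub b b') = nq e"
    if h: "(a, b) \<in> S" "(a', b') \<in> S" "(a, b) \<noteq> (a', b')" for a b a' b'
  proof -
    obtain t where t: "a = a1 + t * d" "b = b1 + t * e" using h(1) unfolding S_def L_def by auto
    obtain s where s: "a' = a1 + s * d" "b' = b1 + s * e" using h(2) unfolding S_def L_def by auto
    have ea: "nq (qsub a a') = nq (qsub t s) * nq d" using t s by (simp add: sub_line nq_mult)
    have eb: "nq (qsub b b') = nq (qsub t s) * nq e" using t s by (simp add: sub_line nq_mult)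
    have "t \<noteq> s" using t s h(3) by auto
    then have nts: "nq (qsub t s) > 0" using nq_zero[of t s] nq_nonneg[of "qsub t s"] by auto
    then have "nq (qsub a a') > 0" using ea nqd by simp
    then have "a \<noteq> a'" by (metis nq_zero less_irrefl)
    moreover have "a \<in> A" "a' \<in> A" using h S_def by auto
    ultimately have "nq (qsub a a') \<ge> nq d" using minA by simp
    then have "nq d \<le> nq (qsub t s) * nq d" using ea by simp
    then have t1: "nq (qsub t s) \<ge> 1" using nqd by (simp add: mult_le_cancel_right1)
    have "1 * nq e \<le> nq (qsub t s) * nq e" using t1 nqe by (intro mult_right_mono) auto
    then have g: "nq (qsub b b') \<ge> nq e" using eb by simp
    then have "nq (qsub b b') > 0" using nqe by linarith
    then have "b \<noteq> b'" by (metis nq_zero less_irrefl)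
    moreover have "b \<in> B" "b' \<in> B" using h S_def by auto
    ultimately have "nq (qsub b b') \<le> nq e" using maxB by simp
    then show ?thesis using g \<open>b \<noteq> b'\<close> by simp
  qed
  have injS: "inj_on (emb \<circ> snd) S"
  proof (rule inj_onI)
    fix x y assume "x \<in> S" "y \<in> S" "(emb \<circ> snd) x = (emb \<circ> snd) y"
    then show "x = y" using key[of "fst x" "snd x" "fst y" "snd y"] emb_inj
      by (auto simp: inj_def)
  qed
  have eqS: "\<forall>x\<in>(emb \<circ> snd) ` S. \<forall>y\<in>(emb \<circ> snd) ` S. x \<noteq> y \<longrightarrow> inner (x - y) (x - y) = nq e"
  proof (intro ballI impI)
    fix x y assume "x \<in> (emb \<circ> snd) ` S" "y \<in> (emb \<circ> snd) ` S" "x \<noteq> y"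
    then obtain p q where "p \<in> S" "q \<in> S" "x = emb (snd p)" "y = emb (snd q)" "p \<noteq> q" by auto
    then show "inner (x - y) (x - y) = nq e"
      using key[of "fst p" "snd p" "fst q" "snd q"] by (simp add: emb_inner)
  qed
  have "card ((emb \<circ> snd) ` S) \<le> DIM((real \<times> real) \<times> (real \<times> real)) + 1"
    by (rule equilateral_card[OF _ nqe eqS]) (simp add: finS)
  then have le5: "card S \<le> 5" using card_image[OF injS] by simp
  show ?thesis using lineL ge2 le5 unfolding S_def by blast
qed

end
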